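(* Let $f\in S_{k,n,d,s}$ and write $f=\sum_{m\in X_k^*} f_m\otimes m$ with $f_m\in\mathbb{F}\langle X_1\rangle\otimes\cdots\otimes\mathbb{F}\langle X_{k-1}\rangle$. Then for every $m\in X_k^*$, the polynomial $f_m$ has an ABP of size $s(d+1)$ with $d$ layers.
   Context: $\mathbb{F}$ is a field. Let $X_j=\{x_{1j},\dots,x_{nj}\}$, $j=1,\dots,k$, be mutually disjoint sets of variables, $\mathbb{F}\langle X_j\rangle$ the free noncommutative polynomial ring, and consider $\mathbb{F}\langle X_1\rangle\otimes\cdots\otimes\mathbb{F}\langle X_k\rangle$, where $1\otimes\cdots\otimes x_{ij}\otimes\cdots\otimes1$ plays the role of the variable $x_{ij}$. Every element can be uniquely written as $\sum_{m\in X_k^*} f_m\otimes m$ with $f_m$ in the tensor product of the first $k-1$ factors. An algebraic branching program (ABP) is a layered directed acyclic graph with a source and a sink, edges only between consecutive layers, each edge labeled by an affine linear form in the variables; it computes the sum over source-to-sink paths of the ordered product of labels; its size is its number of nodes. $S_{k,n,d,s}$ is the set of polynomials in $\mathbb{F}\langle X_1\rangle\otimes\cdots\otimes\mathbb{F}\langle X_k\rangle$ computed by ABPs of size $s$ with $d$ layers. *)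

theory Defs
  imports Main
begin

text \<open>Elements of F<X_1> (x) ... (x) F<X_k>, X_j = {x_1j,...,x_nj}.
  A monomial is a list of k words; the j-th word (a list of indices i < n)
  is the word over X_(j+1) (0-based).  The tensor product basis is exactly these k-tuples of words.\<close>

type_synonym mono = "nat list list"
type_synonym 'a tpoly = "mono \<Rightarrow> 'a"

definition one_mono :: "nat \<Rightarrow> mono" where
  "one_mono k = replicate k []"

text \<open>monomial of the variable x_(i+1)(j+1) (0-based indices i < n, j < k)\<close>
definition var_mono :: "nat \<Rightarrow> nat \<Rightarrow> nat \<Rightarrow> mono" where
  "var_mono k i j = (replicate k [])[j := [i]]"

definition splits :: "mono \<Rightarrow> (mono \<times> mono) set" where
  "splits M = {(M1, M2). length M1 = length M \<and> length M2 = length M \<and>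
                 (\<forall>j < length M. M1 ! j @ M2 ! j = M ! j)}"

definition tmult :: "'a::comm_ring_1 tpoly \<Rightarrow> 'a tpoly \<Rightarrow> 'a tpoly" where
  "tmult p q = (\<lambda>M. \<Sum>(M1, M2) \<in> splits M. p M1 * q M2)"

definition tone :: "nat \<Rightarrow> 'a::comm_ring_1 tpoly" where
  "tone k = (\<lambda>M. if M = one_mono k then 1 else 0)"

primrec tprod :: "nat \<Rightarrow> 'a::comm_ring_1 tpoly list \<Rightarrow> 'a tpoly" where
  "tprod k [] = tone k"
| "tprod k (p # ps) = tmult p (tprod k ps)"

definition aff_poly :: "nat \<Rightarrow> nat \<Rightarrow> 'a::comm_ring_1 \<times> (nat \<Rightarrow> nat \<Rightarrow> 'a) \<Rightarrow> 'a tpoly" where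
  "aff_poly k n la = (\<lambda>M. (if M = one_mono k then fst la else 0)
      + (\<Sum>i<n. \<Sum>j<k. if M = var_mono k i j then snd la i j else 0))"

definition paths :: "(nat \<times> nat) set \<Rightarrow> nat \<Rightarrow> nat \<Rightarrow> nat list set" where
  "paths E src snk = {vs. vs \<noteq> [] \<and> hd vs = src \<and> last vs = snk \<and>
       (\<forall>t. Suc t < length vs \<longrightarrow> (vs ! t, vs ! Suc t) \<in> E)}"

definition abp_poly :: "nat \<Rightarrow> nat \<Rightarrow> (nat \<times> nat) set \<Rightarrow> nat \<Rightarrow> nat \<Rightarrow>
    (nat \<Rightarrow> nat \<Rightarrow> 'a::comm_ring_1 \<times> (nat \<Rightarrow> nat \<Rightarrow> 'a)) \<Rightarrow> 'a tpoly" where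
  "abp_poly k n E src snk lab = (\<lambda>M. \<Sum>vs \<in> paths E src snk.
      tprod k (map (\<lambda>t. aff_poly k n (lab (vs ! t) (vs ! Suc t))) [0..<length vs - 1]) M)"

definition abp_computes :: "nat \<Rightarrow> nat \<Rightarrow> nat \<Rightarrow> nat \<Rightarrow> 'a::comm_ring_1 tpoly \<Rightarrow> bool" where
  "abp_computes k n d s f \<longleftrightarrow>
     (\<exists>(V :: nat set) E layer src snk lab.
        finite V \<and> card V = s \<and> E \<subseteq> V \<times> V \<and>
        (\<forall>(u, v) \<in> E. layer v = Suc (layer u)) \<and>
        (\<forall>v \<in> V. layer v < d) \<and>
        src \<in> V \<and> snk \<in> V \<and> layer src = 0 \<and> layer snk = d - 1 \<and>
        f = abp_poly k n E src snk lab)"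

definition S_abp :: "nat \<Rightarrow> nat \<Rightarrow> nat \<Rightarrow> nat \<Rightarrow> 'a::comm_ring_1 tpoly set" where
  "S_abp k n d s = {f. abp_computes k n d s f}"

end

theory Submission
  imports Defs "HOL-Library.Nat_Bijection" "HOL-Library.Sublist"
begin

lemma splits_finite: "finite (splits X)"
proof -
  define S where "S = (\<Union>x\<in>set X. set (prefixes x) \<union> set (suffixes x))"
  define A where "A = {M. set M \<subseteq> S \<and> length M = length X}"
  have fS: "finite S" unfolding S_def by auto
  have fA: "finite A" unfolding A_def by (rule finite_lists_length_eq[OF fS])
  have "splits X \<subseteq> A \<times> A"
  proof
    fix p assume p: "p \<in> splits X"
    obtain M1 M2 where pe: "p = (M1, M2)" by (cases p)
    have l1: "length M1 = length X" and l2: "length M2 = length X"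
      and e: "\<forall>j<length X. M1 ! j @ M2 ! j = X ! j" using p pe by (auto simp: splits_def)
    have "set M1 \<subseteq> S"
    proof
      fix y assume "y \<in> set M1"
      then obtain j where j: "j < length M1" "y = M1 ! j" by (auto simp: in_set_conv_nth)
      have "prefix y (X ! j)" using e j l1 by (metis prefixI)
      moreover have "X ! j \<in> set X" using j l1 by auto
      ultimately show "y \<in> S" unfolding S_def by auto
    qed
    moreover have "set M2 \<subseteq> S"
    proof
      fix y assume "y \<in> set M2"
      then obtain j where j: "j < length M2" "y = M2 ! j" by (auto simp: in_set_conv_nth)
      have "suffix y (X ! j)" using e j l2 by (metis suffixI)
      moreover have "X ! j \<in> set X" using j l2 by auto
      ultimately show "y \<in> S" unfolding S_def by auto
    qed
    ultimately show "p \<in> A \<times> A" using pe l1 l2 unfolding A_def by auto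
  qed
  then show ?thesis using fA by (meson finite_SigmaI finite_subset)
qed

lemma one_split: "(one_mono (length X), Z) \<in> splits X \<longleftrightarrow> Z = X"
  unfolding splits_def one_mono_def by (auto intro: nth_equalityI)

lemma var_split:
  assumes j: "j < length X"
  shows "(var_mono (length X) i j, Z) \<in> splits X \<longleftrightarrow>
     (X ! j \<noteq> [] \<and> hd (X ! j) = i \<and> Z = X[j := tl (X ! j)])"
proof
  assume h: "(var_mono (length X) i j, Z) \<in> splits X"
  have lz: "length Z = length X" and e: "\<forall>j'<length X. ((replicate (length X) [])[j := [i]]) ! j' @ Z ! j' = X ! j'"
    using h by (auto simp: splits_def var_mono_def)
  have xj: "X ! j = i # Z ! j" using e j by (metis append_Cons append_Nil length_replicate nth_list_update_eq)
  have "Z = X[j := tl (X ! j)]"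
  proof (rule nth_equalityI)
    show "length Z = length (X[j := tl (X ! j)])" using lz by simp
    fix j' assume "j' < length Z"
    then show "Z ! j' = X[j := tl (X ! j)] ! j'" using e xj lz
      by (cases "j' = j") auto
  qed
  then show "X ! j \<noteq> [] \<and> hd (X ! j) = i \<and> Z = X[j := tl (X ! j)]" using xj by simp
next
  assume h: "X ! j \<noteq> [] \<and> hd (X ! j) = i \<and> Z = X[j := tl (X ! j)]"
  show "(var_mono (length X) i j, Z) \<in> splits X"
    unfolding splits_def var_mono_def
  proof (clarsimp, intro conjI allI impI)
    show "length Z = length X" using h by simp
    fix j' assume "j' < length X"
    then show "(replicate (length X) [])[j := [i]] ! j' @ Z ! j' = X ! j'"
      using h j by (cases "j' = j") auto
  qed
qed

lemma sum_splits_delta: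
  fixes a :: "'a::comm_ring_1"
  assumes "\<forall>Z. (Y, Z) \<in> splits X \<longleftrightarrow> (P \<and> Z = Z0)"
  shows "(\<Sum>p\<in>splits X. (if fst p = Y then a else 0) * h (snd p)) = (if P then a * h Z0 else 0)"
proof -
  have "(\<Sum>p\<in>splits X. (if fst p = Y then a else 0) * h (snd p))
      = (\<Sum>p\<in>splits X. if p = (Y, Z0) then (if P then a * h Z0 else 0) else 0)"
  proof (rule sum.cong)
    fix p assume p: "p \<in> splits X"
    obtain p1 p2 where pe: "p = (p1, p2)" by (cases p)
    show "(if fst p = Y then a else 0) * h (snd p) = (if p = (Y, Z0) then (if P then a * h Z0 else 0) else 0)"
      using assms p pe by auto
  qed simp
  also have "\<dots> = (if P then a * h Z0 else 0)"
    using assms by (simp add: sum.delta[OF splits_finite])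
  finally show ?thesis .
qed

lemma tmult_sum_right: "tmult p (\<lambda>M. \<Sum>x\<in>A. q x M) X = (\<Sum>x\<in>A. tmult p (q x) X)"
  unfolding tmult_def by (simp add: sum_distrib_left case_prod_unfold sum.swap[of _ A])

lemma tmult_aff:
  fixes l :: "'a::comm_ring_1 \<times> (nat \<Rightarrow> nat \<Rightarrow> 'a)"
  assumes lx: "length X = k"
  shows "tmult (aff_poly k n l) Q X = fst l * Q X +
    (\<Sum>i<n. \<Sum>j<k. if X ! j \<noteq> [] \<and> hd (X ! j) = i then snd l i j * Q (X[j := tl (X ! j)]) else 0)"
proof -
  have "tmult (aff_poly k n l) Q X = (\<Sum>p\<in>splits X. aff_poly k n l (fst p) * Q (snd p))"
    unfolding tmult_def by (simp add: case_prod_unfold)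
  also have "\<dots> = (\<Sum>p\<in>splits X. (if fst p = one_mono k then fst l else 0) * Q (snd p))
      + (\<Sum>i<n. \<Sum>j<k. \<Sum>p\<in>splits X. (if fst p = var_mono k i j then snd l i j else 0) * Q (snd p))"
    unfolding aff_poly_def
    by (simp add: distrib_right sum.distrib sum_distrib_right sum.swap[of _ "splits X"])
  also have "(\<Sum>p\<in>splits X. (if fst p = one_mono k then fst l else 0) * Q (snd p)) = fst l * Q X"
    using sum_splits_delta[of "one_mono k" X True X] one_split[of X] lx by simp
  also have "(\<Sum>i<n. \<Sum>j<k. \<Sum>p\<in>splits X. (if fst p = var_mono k i j then snd l i j else 0) * Q (snd p))
     = (\<Sum>i<n. \<Sum>j<k. if X ! j \<noteq> [] \<and> hd (X ! j) = i then snd l i j * Q (X[j := tl (X ! j)]) else 0)"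
  proof (intro sum.cong refl)
    fix i j assume "j \<in> {..<k}"
    then have j: "j < length X" using lx by simp
    show "(\<Sum>p\<in>splits X. (if fst p = var_mono k i j then snd l i j else 0) * Q (snd p))
       = (if X ! j \<noteq> [] \<and> hd (X ! j) = i then snd l i j * Q (X[j := tl (X ! j)]) else 0)"
    proof -
      have "\<forall>Z. (var_mono k i j, Z) \<in> splits X \<longleftrightarrow> ((X ! j \<noteq> [] \<and> hd (X ! j) = i) \<and> Z = X[j := tl (X ! j)])"
        using var_split[OF j] lx by simp
      from sum_splits_delta[OF this, of "snd l i j" Q] show ?thesis by simp
    qed
  qed
  finally show ?thesis .
qed

lemma aff_supp: "length M \<noteq> k \<Longrightarrow> aff_poly k n l M = 0"
proof -
  assume h: "length M \<noteq> k"
  have "M \<noteq> one_mono k" using h by (auto simp: one_mono_def)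
  moreover have "\<And>i j. M \<noteq> var_mono k i j" using h by (auto simp: var_mono_def)
  ultimately show ?thesis unfolding aff_poly_def by simp
qed

lemma tprod_supp:
  assumes "\<forall>p\<in>set ps. \<forall>M. length M \<noteq> k \<longrightarrow> p M = 0" and "length M \<noteq> k"
  shows "tprod k ps M = 0"
proof (cases ps)
  case Nil
  then show ?thesis using assms(2) by (auto simp: tone_def one_mono_def)
next
  case (Cons p qs)
  have "\<And>M1 M2. (M1, M2) \<in> splits M \<Longrightarrow> p M1 = 0"
    using assms Cons by (auto simp: splits_def)
  then show ?thesis using Cons by (auto simp: tmult_def intro!: sum.neutral)
qed

lemma abp_supp: "length M \<noteq> k \<Longrightarrow> abp_poly k n E u snk lab M = 0"
  unfolding abp_poly_def
  by (auto intro!: sum.neutral tprod_supp aff_supp)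

lemma paths_decomp:
  "paths E u snk = (if u = snk then {[u]} else {}) \<union> (\<Union>v\<in>{v. (u, v) \<in> E}. (#) u ` paths E v snk)"
proof (rule set_eqI, rule iffI)
  fix vs assume vs: "vs \<in> paths E u snk"
  then obtain rest where vr: "vs = u # rest"
    unfolding paths_def by (cases vs) auto
  show "vs \<in> (if u = snk then {[u]} else {}) \<union> (\<Union>v\<in>{v. (u, v) \<in> E}. (#) u ` paths E v snk)"
  proof (cases rest)
    case Nil
    then show ?thesis using vs vr by (auto simp: paths_def)
  next
    case (Cons v rest')
    have e: "\<forall>t. Suc t < length vs \<longrightarrow> (vs ! t, vs ! Suc t) \<in> E" and lv: "last vs = snk"
      using vs by (auto simp: paths_def)
    have uv: "(u, v) \<in> E" using e[rule_format, of 0] vr Cons by simp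
    have "rest \<in> paths E v snk"
      unfolding paths_def
    proof (intro CollectI conjI allI impI)
      show "rest \<noteq> []" "hd rest = v" using Cons by auto
      show "last rest = snk" using lv vr Cons by simp
      fix t assume "Suc t < length rest"
      then show "(rest ! t, rest ! Suc t) \<in> E" using e[rule_format, of "Suc t"] vr by simp
    qed
    then show ?thesis using uv vr by blast
  qed
next
  fix vs assume "vs \<in> (if u = snk then {[u]} else {}) \<union> (\<Union>v\<in>{v. (u, v) \<in> E}. (#) u ` paths E v snk)"
  then consider "u = snk" "vs = [u]" | v p where "(u, v) \<in> E" "p \<in> paths E v snk" "vs = u # p"
    by (auto split: if_splits)
  then show "vs \<in> paths E u snk"
  proof cases
    case 1 then show ?thesis by (auto simp: paths_def)
  next
    case 2
    have p: "p \<noteq> []" "hd p = v" "last p = snk" "\<forall>t. Suc t < length p \<longrightarrow> (p ! t, p ! Suc t) \<in> E"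
      using 2 by (auto simp: paths_def)
    show ?thesis unfolding paths_def
    proof (intro CollectI conjI allI impI)
      show "vs \<noteq> []" "hd vs = u" using 2 by auto
      show "last vs = snk" using 2 p by simp
      fix t assume t: "Suc t < length vs"
      show "(vs ! t, vs ! Suc t) \<in> E"
      proof (cases t)
        case 0 then show ?thesis using 2 p by (cases p) auto
      next
        case (Suc t') then show ?thesis using 2 p t by simp
      qed
    qed
  qed
qed

lemma paths_finite:
  assumes fV: "finite V" and EV: "E \<subseteq> V \<times> V" and ly: "\<forall>(u, v)\<in>E. ly v = Suc (ly u)"
    and lyd: "\<forall>v\<in>V. ly v < (d::nat)"
  shows "finite (paths E u snk)"
proof (induction "d - ly u" arbitrary: u rule: less_induct)
  case less
  have fS: "finite {v. (u, v) \<in> E}" using EV fV by (auto intro: finite_subset)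
  have "finite (paths E v snk)" if v: "(u, v) \<in> E" for v
  proof -
    have "v \<in> V" using v EV by auto
    then have "ly v < d" using lyd by auto
    moreover have "ly v = Suc (ly u)" using v ly by auto
    ultimately show ?thesis using less by simp
  qed
  then show ?case using fS by (subst paths_decomp) auto
qed

lemma tprod_cons_path:
  assumes "vs \<noteq> []" "hd vs = v"
  shows "tprod k (map (\<lambda>t. aff_poly k n (lab ((u # vs) ! t) ((u # vs) ! Suc t))) [0..<length (u # vs) - 1])
     = tmult (aff_poly k n (lab u v)) (tprod k (map (\<lambda>t. aff_poly k n (lab (vs ! t) (vs ! Suc t))) [0..<length vs - 1]))"
proof -
  have "[0..<length (u # vs) - 1] = 0 # map Suc [0..<length vs - 1]"
    using assms by (simp add: map_Suc_upt upt_conv_Cons)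
  moreover have "vs ! 0 = v" using assms by (cases vs) auto
  ultimately show ?thesis by (simp add: comp_def)
qed

lemma abp_rec:
  assumes fS: "finite {v. (u, v) \<in> E}" and fP: "\<forall>v\<in>{v. (u, v) \<in> E}. finite (paths E v snk)"
  shows "abp_poly k n E u snk lab M = (if u = snk then tone k M else 0) +
     (\<Sum>v\<in>{v. (u, v) \<in> E}. tmult (aff_poly k n (lab u v)) (abp_poly k n E v snk lab) M)"
proof -
  define S where "S = {v. (u, v) \<in> E}"
  define T where "T vs = tprod k (map (\<lambda>t. aff_poly k n (lab (vs ! t) (vs ! Suc t))) [0..<length vs - 1])" for vs
  define A where "A = (if u = snk then {[u]} else {})"
  define B where "B = (\<Union>v\<in>S. (#) u ` paths E v snk)"
  have pe: "paths E u snk = A \<union> B" unfolding A_def B_def S_def by (rule paths_decomp)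
  have fA: "finite A" unfolding A_def by simp
  have fB: "finite B" unfolding B_def using fS fP S_def by auto
  have dAB: "A \<inter> B = {}" unfolding A_def B_def by (auto simp: paths_def)
  have "abp_poly k n E u snk lab M = (\<Sum>vs\<in>A \<union> B. T vs M)"
    unfolding abp_poly_def T_def pe by simp
  also have "\<dots> = (\<Sum>vs\<in>A. T vs M) + (\<Sum>vs\<in>B. T vs M)"
    by (rule sum.union_disjoint[OF fA fB dAB])
  also have "(\<Sum>vs\<in>A. T vs M) = (if u = snk then tone k M else 0)"
    unfolding A_def T_def by simp
  also have "(\<Sum>vs\<in>B. T vs M) = (\<Sum>v\<in>S. \<Sum>vs\<in>(#) u ` paths E v snk. T vs M)"
    unfolding B_def
  proof (rule sum.UNION_disjoint)
    show "finite S" using fS S_def by simp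
    show "\<forall>v\<in>S. finite ((#) u ` paths E v snk)" using fP S_def by auto
    show "\<forall>v\<in>S. \<forall>v'\<in>S. v \<noteq> v' \<longrightarrow> (#) u ` paths E v snk \<inter> (#) u ` paths E v' snk = {}"
      by (auto simp: paths_def)
  qed
  also have "\<dots> = (\<Sum>v\<in>S. tmult (aff_poly k n (lab u v)) (abp_poly k n E v snk lab) M)"
  proof (rule sum.cong[OF refl])
    fix v assume "v \<in> S"
    have "(\<Sum>vs\<in>(#) u ` paths E v snk. T vs M) = (\<Sum>vs\<in>paths E v snk. T (u # vs) M)"
      by (simp add: sum.reindex)
    also have "\<dots> = (\<Sum>vs\<in>paths E v snk. tmult (aff_poly k n (lab u v)) (T vs) M)"
    proof (rule sum.cong[OF refl])
      fix vs assume "vs \<in> paths E v snk"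
      then have a: "vs \<noteq> []" "hd vs = v" by (auto simp: paths_def)
      show "T (u # vs) M = tmult (aff_poly k n (lab u v)) (T vs) M"
        unfolding T_def tprod_cons_path[OF a] ..
    qed
    also have "\<dots> = tmult (aff_poly k n (lab u v)) (\<lambda>M. \<Sum>vs\<in>paths E v snk. T vs M) M"
      by (rule tmult_sum_right[symmetric])
    also have "\<dots> = tmult (aff_poly k n (lab u v)) (abp_poly k n E v snk lab) M"
      unfolding abp_poly_def T_def by simp
    finally show "(\<Sum>vs\<in>(#) u ` paths E v snk. T vs M) = tmult (aff_poly k n (lab u v)) (abp_poly k n E v snk lab) M" .
  qed
  finally show ?thesis unfolding S_def .
qed

definition E2 :: "(nat \<times> nat) set \<Rightarrow> nat \<Rightarrow> (nat \<times> nat) set" where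
  "E2 E L = {(prod_encode (u, t), prod_encode (v, t)) | u v t. (u, v) \<in> E \<and> t \<le> L}
          \<union> {(prod_encode (u, t), prod_encode (v, Suc t)) | u v t. (u, v) \<in> E \<and> t < L}"

definition lab2 :: "(nat \<Rightarrow> nat \<Rightarrow> 'a::zero \<times> (nat \<Rightarrow> nat \<Rightarrow> 'a)) \<Rightarrow> nat list \<Rightarrow> nat \<Rightarrow> nat \<Rightarrow> nat \<Rightarrow> 'a \<times> (nat \<Rightarrow> nat \<Rightarrow> 'a)" where
  "lab2 lab m K x y = (if snd (prod_decode y) = snd (prod_decode x)
     then lab (fst (prod_decode x)) (fst (prod_decode y))
     else (snd (lab (fst (prod_decode x)) (fst (prod_decode y))) (m ! snd (prod_decode x)) K, \<lambda>_ _. 0))"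

definition ly2 :: "(nat \<Rightarrow> nat) \<Rightarrow> nat \<Rightarrow> nat" where
  "ly2 ly x = ly (fst (prod_decode x))"

lemma succ2:
  assumes "t \<le> L"
  shows "{y. (prod_encode (u, t), y) \<in> E2 E L} = (\<lambda>v. prod_encode (v, t)) ` {v. (u, v) \<in> E}
     \<union> (if t < L then (\<lambda>v. prod_encode (v, Suc t)) ` {v. (u, v) \<in> E} else {})"
  using assms unfolding E2_def by auto

lemma E2_sub: "E \<subseteq> V \<times> V \<Longrightarrow> L \<le> D \<Longrightarrow> E2 E L \<subseteq> prod_encode ` (V \<times> {0..D}) \<times> prod_encode ` (V \<times> {0..D})"
  unfolding E2_def by auto

lemma E2_ly: "\<forall>(u, v)\<in>E. ly v = Suc (ly u) \<Longrightarrow> \<forall>(x, y)\<in>E2 E L. ly2 ly y = Suc (ly2 ly x)"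
  unfolding E2_def ly2_def by auto

lemma V2_ly: "\<forall>v\<in>V. ly v < (d::nat) \<Longrightarrow> \<forall>x\<in>prod_encode ` (V \<times> {0..D}). ly2 ly x < d"
  unfolding ly2_def by auto

lemma E2_paths_finite:
  assumes fV: "finite V" and EV: "E \<subseteq> V \<times> V" and ly: "\<forall>(u, v)\<in>E. ly v = Suc (ly u)"
    and lyd: "\<forall>v\<in>V. ly v < (d::nat)"
  shows "finite (paths (E2 E L) x y)"
  by (rule paths_finite[of "prod_encode ` (V \<times> {0..L})" _ "ly2 ly" d])
     (use fV E2_sub[OF EV, of L L] E2_ly[OF ly] V2_ly[OF lyd] in auto)

lemma sum_succ2:
  assumes t: "t \<le> L" and fS: "finite {v. (u, v) \<in> E}"
  shows "(\<Sum>y\<in>{y. (prod_encode (u, t), y) \<in> E2 E L}. F y) =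
     (\<Sum>v\<in>{v. (u, v) \<in> E}. F (prod_encode (v, t))) +
     (if t < L then (\<Sum>v\<in>{v. (u, v) \<in> E}. F (prod_encode (v, Suc t))) else 0)"
proof -
  let ?S = "{v. (u, v) \<in> E}"
  let ?I1 = "(\<lambda>v. prod_encode (v, t)) ` ?S"
  let ?I2 = "(if t < L then (\<lambda>v. prod_encode (v, Suc t)) ` ?S else {})"
  have "(\<Sum>y\<in>?I1 \<union> ?I2. F y) = (\<Sum>y\<in>?I1. F y) + (\<Sum>y\<in>?I2. F y)"
    by (rule sum.union_disjoint) (use fS in auto)
  moreover have "(\<Sum>y\<in>?I1. F y) = (\<Sum>v\<in>?S. F (prod_encode (v, t)))"
    by (subst sum.reindex) (auto simp: inj_on_def)
  moreover have "(\<Sum>y\<in>?I2. F y) = (if t < L then (\<Sum>v\<in>?S. F (prod_encode (v, Suc t))) else 0)"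
    by (cases "t < L") (simp_all add: sum.reindex inj_on_def)
  ultimately show ?thesis using succ2[OF t] by simp
qed

lemma tmult_aff_app:
  fixes l :: "'a::comm_ring_1 \<times> (nat \<Rightarrow> nat \<Rightarrow> 'a)"
  assumes lM: "length M = K" and wn: "set w \<subseteq> {..<n}"
  shows "tmult (aff_poly (Suc K) n l) Q (M @ [w]) = fst l * Q (M @ [w])
     + (\<Sum>i<n. \<Sum>j<K. if M ! j \<noteq> [] \<and> hd (M ! j) = i then snd l i j * Q (M[j := tl (M ! j)] @ [w]) else 0)
     + (if w \<noteq> [] then snd l (hd w) K * Q (M @ [tl w]) else 0)"
proof -
  have "tmult (aff_poly (Suc K) n l) Q (M @ [w]) = fst l * Q (M @ [w]) +
    (\<Sum>i<n. \<Sum>j<Suc K. if (M @ [w]) ! j \<noteq> [] \<and> hd ((M @ [w]) ! j) = i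
        then snd l i j * Q ((M @ [w])[j := tl ((M @ [w]) ! j)]) else 0)"
    by (rule tmult_aff) (simp add: lM)
  also have "(\<Sum>i<n. \<Sum>j<Suc K. if (M @ [w]) ! j \<noteq> [] \<and> hd ((M @ [w]) ! j) = i
        then snd l i j * Q ((M @ [w])[j := tl ((M @ [w]) ! j)]) else 0)
     = (\<Sum>i<n. (\<Sum>j<K. if M ! j \<noteq> [] \<and> hd (M ! j) = i then snd l i j * Q (M[j := tl (M ! j)] @ [w]) else 0)
          + (if w \<noteq> [] \<and> hd w = i then snd l i K * Q (M @ [tl w]) else 0))"
  proof (rule sum.cong[OF refl])
    fix i
    have "(\<Sum>j<K. if (M @ [w]) ! j \<noteq> [] \<and> hd ((M @ [w]) ! j) = i
        then snd l i j * Q ((M @ [w])[j := tl ((M @ [w]) ! j)]) else 0)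
       = (\<Sum>j<K. if M ! j \<noteq> [] \<and> hd (M ! j) = i then snd l i j * Q (M[j := tl (M ! j)] @ [w]) else 0)"
      by (rule sum.cong[OF refl]) (simp add: lM nth_append list_update_append1)
    note h0 = this
    show "(\<Sum>j<Suc K. if (M @ [w]) ! j \<noteq> [] \<and> hd ((M @ [w]) ! j) = i
        then snd l i j * Q ((M @ [w])[j := tl ((M @ [w]) ! j)]) else 0)
       = (\<Sum>j<K. if M ! j \<noteq> [] \<and> hd (M ! j) = i then snd l i j * Q (M[j := tl (M ! j)] @ [w]) else 0)
          + (if w \<noteq> [] \<and> hd w = i then snd l i K * Q (M @ [tl w]) else 0)"
    proof -
      have e1: "(M @ [w]) ! K = w" "\<And>x. (M @ [w])[K := x] = M @ [x]" using lM by auto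
      show ?thesis by (simp only: sum.lessThan_Suc e1 h0)
    qed
  qed
  also have "\<dots> = (\<Sum>i<n. \<Sum>j<K. if M ! j \<noteq> [] \<and> hd (M ! j) = i then snd l i j * Q (M[j := tl (M ! j)] @ [w]) else 0)
     + (\<Sum>i<n. if w \<noteq> [] \<and> hd w = i then snd l i K * Q (M @ [tl w]) else 0)"
    by (rule sum.distrib)
  also have "(\<Sum>i<n. if w \<noteq> [] \<and> hd w = i then snd l i K * Q (M @ [tl w]) else 0)
     = (if w \<noteq> [] then snd l (hd w) K * Q (M @ [tl w]) else 0)"
  proof (cases w)
    case Nil then show ?thesis by simp
  next
    case (Cons a w')
    then have "a < n" using wn by auto
    then show ?thesis using Cons by (simp add: sum.delta')
  qed
  finally show ?thesis by (simp add: add.assoc)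
qed

lemma tmult_aff_const:
  fixes l :: "'a::comm_ring_1 \<times> (nat \<Rightarrow> nat \<Rightarrow> 'a)"
  assumes lM: "length M = K" and z: "\<And>i j. snd l i j = 0"
  shows "tmult (aff_poly K n l) Q M = fst l * Q M"
proof -
  have "(\<Sum>i<n. \<Sum>j<K. if M ! j \<noteq> [] \<and> hd (M ! j) = i then snd l i j * Q (M[j := tl (M ! j)]) else 0) = 0"
    by (intro sum.neutral ballI) (simp add: z)
  then show ?thesis using tmult_aff[OF lM, where l=l and Q=Q and n=n] by simp
qed

lemma tone_app:
  assumes "length M = K" "t \<le> length m"
  shows "(tone (Suc K) (M @ [drop t m]) :: 'a::comm_ring_1) = (if t = length m then tone K M else 0)"
proof -
  have "one_mono (Suc K) = one_mono K @ [[]]" by (simp add: one_mono_def replicate_append_same)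
  then show ?thesis using assms by (auto simp: tone_def)
qed

lemma dsum_cong:
  "(\<And>i j. j < K \<Longrightarrow> f i j = g i j) \<Longrightarrow>
   (\<Sum>i<n. \<Sum>j<K. if M ! j \<noteq> [] \<and> hd (M ! j) = i then f i j else 0)
   = (\<Sum>i<n. \<Sum>j<K. if M ! j \<noteq> [] \<and> hd (M ! j) = i then g i j else (0::'a::comm_ring_1))"
  by (intro sum.cong refl) auto

lemma main_claim:
  fixes lab :: "nat \<Rightarrow> nat \<Rightarrow> 'a::comm_ring_1 \<times> (nat \<Rightarrow> nat \<Rightarrow> 'a)"
  assumes fV: "finite V" and EV: "E \<subseteq> V \<times> V" and ly: "\<forall>(u, v)\<in>E. ly v = Suc (ly u)"
    and lyd: "\<forall>v\<in>V. ly v < (d::nat)" and mn: "set m \<subseteq> {..<n}" and Lm: "L = length m"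
  shows "t \<le> L \<Longrightarrow> length M = K \<Longrightarrow>
    abp_poly K n (E2 E L) (prod_encode (u, t)) (prod_encode (snk, L)) (lab2 lab m K) M
    = abp_poly (Suc K) n E u snk lab (M @ [drop t m])"
proof (induction "d - ly u" arbitrary: u t M rule: less_induct)
  case less
  define S where "S = {v. (u, v) \<in> E}"
  define w where "w = drop t m"
  define P2 where "P2 x = abp_poly K n (E2 E L) x (prod_encode (snk, L)) (lab2 lab m K)" for x
  define P where "P v = abp_poly (Suc K) n E v snk lab" for v
  have fS: "finite S" unfolding S_def using EV fV by (auto intro: finite_subset)
  have IH: "P2 (prod_encode (v, t')) X = P v (X @ [drop t' m])"
    if v: "v \<in> S" and t': "t' \<le> L" and X: "length X = K" for v t' X
  proof -
    have "v \<in> V" using v EV S_def by auto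
    then have "ly v < d" using lyd by auto
    moreover have "ly v = Suc (ly u)" using v ly S_def by auto
    ultimately have "d - ly v < d - ly u" by simp
    then show ?thesis using less.hyps[of v t' X] t' X unfolding P2_def P_def by simp
  qed
  have wn: "set w \<subseteq> {..<n}" unfolding w_def using mn by (meson set_drop_subset subset_trans)
  have w_ne: "w \<noteq> [] \<longleftrightarrow> t < L" unfolding w_def using Lm by auto
  have w_hd: "t < L \<Longrightarrow> hd w = m ! t" unfolding w_def using Lm by (simp add: hd_drop_conv_nth)
  have w_tl: "tl w = drop (Suc t) m" unfolding w_def by (simp add: drop_Suc tl_drop)
  define F where "F y = tmult (aff_poly K n (lab2 lab m K (prod_encode (u, t)) y)) (P2 y) M" for y
  define A where "A v = fst (lab u v) * P v (M @ [w]) + (\<Sum>i<n. \<Sum>j<K. if M ! j \<noteq> [] \<and> hd (M ! j) = i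
      then snd (lab u v) i j * P v (M[j := tl (M ! j)] @ [w]) else 0)" for v
  define C where "C v = snd (lab u v) (m ! t) K * P v (M @ [drop (Suc t) m])" for v
  have succ_fin: "finite {y. (prod_encode (u, t), y) \<in> E2 E L}"
    using succ2[OF less.prems(1), of u E] fS S_def by simp
  have "P2 (prod_encode (u, t)) M = (if prod_encode (u, t) = prod_encode (snk, L) then tone K M else 0)
      + (\<Sum>y\<in>{y. (prod_encode (u, t), y) \<in> E2 E L}. F y)"
    unfolding P2_def F_def
    by (rule abp_rec[OF succ_fin]) (use E2_paths_finite[OF fV EV ly lyd] in auto)
  also have "(\<Sum>y\<in>{y. (prod_encode (u, t), y) \<in> E2 E L}. F y)
      = (\<Sum>v\<in>S. F (prod_encode (v, t))) + (if t < L then (\<Sum>v\<in>S. F (prod_encode (v, Suc t))) else 0)"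
    unfolding S_def by (rule sum_succ2[OF less.prems(1)]) (use fS S_def in simp)
  also have "(\<Sum>v\<in>S. F (prod_encode (v, t))) = (\<Sum>v\<in>S. A v)"
  proof (rule sum.cong[OF refl])
    fix v assume v: "v \<in> S"
    have "F (prod_encode (v, t)) = tmult (aff_poly K n (lab u v)) (P2 (prod_encode (v, t))) M"
      unfolding F_def lab2_def by simp
    also have "\<dots> = fst (lab u v) * P2 (prod_encode (v, t)) M + (\<Sum>i<n. \<Sum>j<K. if M ! j \<noteq> [] \<and> hd (M ! j) = i
      then snd (lab u v) i j * P2 (prod_encode (v, t)) (M[j := tl (M ! j)]) else 0)"
      by (rule tmult_aff) (use less.prems in simp)
    also have "\<dots> = A v"
    proof -
      have "(\<Sum>i<n. \<Sum>j<K. if M ! j \<noteq> [] \<and> hd (M ! j) = i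
        then snd (lab u v) i j * P2 (prod_encode (v, t)) (M[j := tl (M ! j)]) else 0)
        = (\<Sum>i<n. \<Sum>j<K. if M ! j \<noteq> [] \<and> hd (M ! j) = i
        then snd (lab u v) i j * P v (M[j := tl (M ! j)] @ [w]) else 0)"
        by (rule dsum_cong) (simp add: IH[OF v less.prems(1)] less.prems(2) w_def)
      then show ?thesis
        unfolding A_def using IH[OF v less.prems(1) less.prems(2)] w_def by simp
    qed
    finally show "F (prod_encode (v, t)) = A v" .
  qed
  also have "(if t < L then (\<Sum>v\<in>S. F (prod_encode (v, Suc t))) else 0) = (if t < L then (\<Sum>v\<in>S. C v) else 0)"
  proof (cases "t < L")
    case True
    have "F (prod_encode (v, Suc t)) = C v" if v: "v \<in> S" for v
    proof -
      have "F (prod_encode (v, Suc t)) = tmult (aff_poly K n (snd (lab u v) (m ! t) K, \<lambda>_ _. 0)) (P2 (prod_encode (v, Suc t))) M"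
        unfolding F_def lab2_def by simp
      also have "\<dots> = snd (lab u v) (m ! t) K * P2 (prod_encode (v, Suc t)) M"
        by (subst tmult_aff_const) (use less.prems in simp_all)
      also have "\<dots> = C v" unfolding C_def using IH[OF v _ less.prems(2), of "Suc t"] True by simp
      finally show ?thesis .
    qed
    then show ?thesis using True by simp
  qed simp
  finally have L1: "P2 (prod_encode (u, t)) M = (if u = snk \<and> t = L then tone K M else 0)
     + ((\<Sum>v\<in>S. A v) + (if t < L then (\<Sum>v\<in>S. C v) else 0))" by simp
  have "P u (M @ [w]) = (if u = snk then tone (Suc K) (M @ [w]) else 0)
     + (\<Sum>v\<in>S. tmult (aff_poly (Suc K) n (lab u v)) (P v) (M @ [w]))"
    unfolding P_def S_def
    by (rule abp_rec) (use fS S_def paths_finite[OF fV EV ly lyd] in auto)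
  also have "(if u = snk then tone (Suc K) (M @ [w]) else 0) = (if u = snk \<and> t = L then tone K M else 0)"
  proof -
    have T: "tone (Suc K) (M @ [w]) = (if t = L then tone K M else 0)"
      unfolding w_def Lm by (rule tone_app[OF less.prems(2)]) (use less.prems(1) Lm in simp)
    show ?thesis by (simp add: T)
  qed
  also have "(\<Sum>v\<in>S. tmult (aff_poly (Suc K) n (lab u v)) (P v) (M @ [w])) = (\<Sum>v\<in>S. A v + (if t < L then C v else 0))"
  proof (rule sum.cong[OF refl])
    fix v assume v: "v \<in> S"
    show "tmult (aff_poly (Suc K) n (lab u v)) (P v) (M @ [w]) = A v + (if t < L then C v else 0)"
      unfolding A_def C_def
      using tmult_aff_app[OF less.prems(2) wn, of "lab u v" "P v"] w_ne w_hd w_tl by simp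
  qed
  also have "(\<Sum>v\<in>S. A v + (if t < L then C v else 0)) = (\<Sum>v\<in>S. A v) + (if t < L then (\<Sum>v\<in>S. C v) else 0)"
    by (simp add: sum.distrib)
  finally have L2: "P u (M @ [w]) = (if u = snk \<and> t = L then tone K M else 0)
     + ((\<Sum>v\<in>S. A v) + (if t < L then (\<Sum>v\<in>S. C v) else 0))" .
  show ?case using L1 L2 unfolding P2_def P_def w_def by simp
qed

lemma paths_empty:
  assumes EV: "E \<subseteq> V \<times> V" and ly: "\<forall>(u, v)\<in>E. ly v = Suc (ly u)"
    and lyd: "\<forall>v\<in>V. ly v < (d::nat)" and snkd: "ly snk < d"
  shows "t \<le> L \<Longrightarrow> d + t \<le> ly u + L \<Longrightarrow>
    paths (E2 E L) (prod_encode (u, t)) (prod_encode (snk, L)) = {}"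
proof (induction "d - ly u" arbitrary: u t rule: less_induct)
  case less
  have ne: "prod_encode (u, t) \<noteq> prod_encode (snk, L)"
  proof
    assume "prod_encode (u, t) = prod_encode (snk, L)"
    then have "u = snk" "t = L" by auto
    then show False using less.prems snkd by simp
  qed
  have IH: "paths (E2 E L) (prod_encode (v, t')) (prod_encode (snk, L)) = {}"
    if v: "(u, v) \<in> E" and t': "t' \<le> L" "t' \<le> Suc t" for v t'
  proof -
    have "v \<in> V" using v EV by auto
    then have "ly v < d" using lyd by auto
    moreover have lv: "ly v = Suc (ly u)" using v ly by auto
    ultimately have "d - ly v < d - ly u" by simp
    moreover have "d + t' \<le> ly v + L" using less.prems(2) lv t' by simp
    ultimately show ?thesis using less.hyps t' by blast
  qed
  have "\<forall>y\<in>{y. (prod_encode (u, t), y) \<in> E2 E L}. paths (E2 E L) y (prod_encode (snk, L)) = {}"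
    using succ2[OF less.prems(1), of u E] IH less.prems(1) by auto
  then show ?case using ne by (subst paths_decomp) auto
qed

lemma zero_abp:
  assumes "2 \<le> S" "1 \<le> d"
  shows "abp_computes K n d S (\<lambda>M. 0 :: 'a::comm_ring_1)"
proof -
  have P: "paths {} 0 1 = {}"
  proof (rule equals0I)
    fix vs assume vs: "vs \<in> paths {} 0 (1::nat)"
    then have "vs \<noteq> []" "hd vs = 0" "last vs = 1" "\<forall>t. Suc t < length vs \<longrightarrow> False"
      by (auto simp: paths_def)
    then show False by (cases vs; cases "tl vs") auto
  qed
  have Z: "(\<lambda>M. 0) = abp_poly K n {} 0 1 (\<lambda>_ _. (0::'a, \<lambda>_ _. 0))"
    unfolding abp_poly_def P by simp
  define ly0 where "ly0 = (\<lambda>x::nat. if x = 1 then d - 1 else (0::nat))"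
  show ?thesis unfolding abp_computes_def
    apply (rule exI[of _ "{..<S}"], rule exI[of _ "{}"], rule exI[of _ ly0], rule exI[of _ 0],
           rule exI[of _ 1], rule exI[of _ "\<lambda>_ _. (0::'a, \<lambda>_ _. 0)"])
    using assms Z unfolding ly0_def by simp
qed

theorem lemma12:
  fixes f :: "'a::field tpoly" and k n d s :: nat and m :: "nat list"
  assumes "1 \<le> k"
    and "f \<in> S_abp k n d s"
    and "set m \<subseteq> {..<n}"
  shows "abp_computes (k - 1) n d (s * (d + 1)) (\<lambda>M. f (M @ [m]))"
proof -
  from assms(2) obtain V E ly src snk lab where
    fV: "finite V" and cV: "card V = s" and EV: "E \<subseteq> V \<times> V"
    and ly: "\<forall>(u, v)\<in>E. ly v = Suc (ly u)" and lyd: "\<forall>v\<in>V. ly v < d"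
    and srcV: "src \<in> V" and snkV: "snk \<in> V" and ls: "ly src = 0" and lsn: "ly snk = d - 1"
    and fe: "f = abp_poly k n E src snk lab"
    unfolding S_abp_def abp_computes_def by blast
  obtain K where kK: "k = Suc K" using assms(1) by (cases k) auto
  define L where "L = length m"
  have "ly src < d" using srcV lyd by blast
  then have d1: "1 \<le> d" using ls by simp
  have "card V > 0" using fV srcV by (auto simp: card_gt_0_iff)
  then have s1: "1 \<le> s" using cV by simp
  have snkd: "ly snk < d" using snkV lyd by auto
  have claim: "f (M @ [m]) = abp_poly K n (E2 E L) (prod_encode (src, 0)) (prod_encode (snk, L)) (lab2 lab m K) M"
    if "length M = K" for M
    using main_claim[OF fV EV ly lyd assms(3) L_def, of 0 M K src snk lab] that fe kK by simp
  have supp: "f (M @ [m]) = 0" if "length M \<noteq> K" for M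
    using abp_supp[of "M @ [m]" k n E src snk lab] that fe kK by simp
  have "abp_computes K n d (s * (d + 1)) (\<lambda>M. f (M @ [m]))"
  proof (cases "L < d")
    case True
    define V' where "V' = prod_encode ` (V \<times> {0..d})"
    have eq: "(\<lambda>M. f (M @ [m])) = abp_poly K n (E2 E L) (prod_encode (src, 0)) (prod_encode (snk, L)) (lab2 lab m K)"
    proof
      fix M show "f (M @ [m]) = abp_poly K n (E2 E L) (prod_encode (src, 0)) (prod_encode (snk, L)) (lab2 lab m K) M"
        using claim supp abp_supp by (cases "length M = K") auto
    qed
    have cV': "card V' = s * (d + 1)"
      unfolding V'_def by (simp add: card_image inj_prod_encode card_cartesian_product cV)
    have c1: "E2 E L \<subseteq> V' \<times> V'" unfolding V'_def using E2_sub[OF EV, of L d] True by simp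
    have c2: "\<forall>(u, v)\<in>E2 E L. ly2 ly v = Suc (ly2 ly u)" by (rule E2_ly[OF ly])
    have c3: "\<forall>v\<in>V'. ly2 ly v < d" unfolding V'_def by (rule V2_ly[OF lyd])
    have c4: "prod_encode (src, 0) \<in> V'" "prod_encode (snk, L) \<in> V'"
      unfolding V'_def using srcV snkV True by auto
    have c5: "ly2 ly (prod_encode (src, 0)) = 0" "ly2 ly (prod_encode (snk, L)) = d - 1"
      unfolding ly2_def using ls lsn by auto
    have fV': "finite V'" unfolding V'_def using fV by simp
    show ?thesis unfolding abp_computes_def
      apply (rule exI[of _ V'], rule exI[of _ "E2 E L"], rule exI[of _ "ly2 ly"],
             rule exI[of _ "prod_encode (src, 0)"], rule exI[of _ "prod_encode (snk, L)"],
             rule exI[of _ "lab2 lab m K"])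
      using fV' cV' c1 c2 c3 c4 c5 eq by simp
  next
    case False
    have "(\<lambda>M. f (M @ [m])) = (\<lambda>M. 0)"
    proof
      fix M show "f (M @ [m]) = 0"
      proof (cases "length M = K")
        case True
        have "paths (E2 E L) (prod_encode (src, 0)) (prod_encode (snk, L)) = {}"
          by (rule paths_empty[OF EV ly lyd snkd]) (use False ls in simp_all)
        then show ?thesis using claim[OF True] by (simp add: abp_poly_def)
      qed (rule supp)
    qed
    moreover have "abp_computes K n d (s * (d + 1)) (\<lambda>M. 0 :: 'a)"
    proof (rule zero_abp)
      have "1 * 1 \<le> s * d" using s1 d1 by (rule mult_le_mono)
      then have "2 \<le> s + s * d" using s1 by linarith
      moreover have "s * (d + 1) = s + s * d" by (simp add: algebra_simps)
      ultimately show "2 \<le> s * (d + 1)" by simp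
    qed (use d1 in simp)
    ultimately show ?thesis by simp
  qed
  then show ?thesis using kK by simp
qed

end
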